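(* Let $k$ be a field, $A_0\subseteq\mathrm{M}_n(k)$ a $d$-dimensional $k$-subalgebra, and $R=k[\epsilon]/(\epsilon^2)$. Let $\mathrm{Def}_{A_0}(R)$ be the set of $R$-subalgebras $A\subseteq\mathrm{M}_n(R)$ such that $A$ and $\mathrm{M}_n(R)/A$ are free $R$-modules, $\mathrm{rank}_R A=d$, and the image of $A$ under reduction $\mathrm{M}_n(R)\to\mathrm{M}_n(k)$ modulo $\epsilon$ is $A_0$ (i.e. $A\otimes_R k=A_0$ inside $\mathrm{M}_n(k)$). Let $G(R)=\{P\in\mathrm{PGL}_n(R)\mid P\equiv [I_n]\bmod \epsilon\}$, acting on $\mathrm{Def}_{A_0}(R)$ by $(A,P)\mapsto P^{-1}AP$. Then there is a bijection $H^1(A_0,\mathrm{M}_n(k)/A_0)\cong \mathrm{Def}_{A_0}(R)/G(R)$.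
   Context: $H^1$ is Hochschild cohomology, with $\mathrm{M}_n(k)/A_0$ an $A_0$-bimodule via matrix multiplication. $\mathrm{PGL}_n(R)=\mathrm{GL}_n(R)/(R^\times I_n)$ for the local ring $R$, and $[I_n]$ is the class of the identity. *)

theory Defs
  imports "HOL-Analysis.Analysis"
begin

(* Matrices over k: type 'k^'n^'n (n = CARD('n)).  Matrices over R = k[eps]/(eps^2):
   pairs (X,Y) standing for X + eps*Y.  Elements of R: pairs (a,b) = a + eps*b. *)

type_synonym ('k,'n) kmat = "'k^'n^'n"
type_synonym ('k,'n) rmat = "('k,'n) kmat \<times> ('k,'n) kmat"
type_synonym 'k rel_ring = "'k \<times> 'k"

definition ksc :: "'k::field \<Rightarrow> ('k,'n::finite) kmat \<Rightarrow> ('k,'n) kmat" where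
  "ksc c X = (\<chi> i j. c * X$i$j)"

definition k_subalgebra :: "('k::field,'n::finite) kmat set \<Rightarrow> bool" where
  "k_subalgebra A0 \<longleftrightarrow> 0 \<in> A0 \<and> mat 1 \<in> A0 \<and>
     (\<forall>x\<in>A0. \<forall>y\<in>A0. x + y \<in> A0 \<and> x ** y \<in> A0) \<and>
     (\<forall>c. \<forall>x\<in>A0. ksc c x \<in> A0)"

definition k_dim :: "('k::field,'n::finite) kmat set \<Rightarrow> nat \<Rightarrow> bool" where
  "k_dim A0 d \<longleftrightarrow> (\<exists>b :: nat \<Rightarrow> ('k,'n) kmat. (\<forall>i<d. b i \<in> A0) \<and>
     (\<forall>x\<in>A0. \<exists>c :: nat \<Rightarrow> 'k. x = (\<Sum>i<d. ksc (c i) (b i))) \<and>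
     (\<forall>c :: nat \<Rightarrow> 'k. (\<Sum>i<d. ksc (c i) (b i)) = 0 \<longrightarrow> (\<forall>i<d. c i = 0)))"

definition cos :: "('k::field,'n::finite) kmat set \<Rightarrow> ('k,'n) kmat \<Rightarrow> ('k,'n) kmat set" where
  "cos A0 m = {x. x - m \<in> A0}"

definition quotmod :: "('k::field,'n::finite) kmat set \<Rightarrow> ('k,'n) kmat set set" where
  "quotmod A0 = range (cos A0)"

definition Der :: "('k::field,'n::finite) kmat set \<Rightarrow> (('k,'n) kmat \<Rightarrow> ('k,'n) kmat set) set" where
  "Der A0 = {D. (\<forall>a\<in>A0. D a \<in> quotmod A0) \<and> (\<forall>a. a \<notin> A0 \<longrightarrow> D a = {}) \<and>
      (\<forall>a\<in>A0. \<forall>b\<in>A0. \<forall>c. \<forall>x\<in>D a. \<forall>y\<in>D b.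
          D (ksc c a + b) = cos A0 (ksc c x + y) \<and>
          D (a ** b) = cos A0 (a ** y + x ** b))}"

definition inner_rel :: "('k::field,'n::finite) kmat set \<Rightarrow>
    ((('k,'n) kmat \<Rightarrow> ('k,'n) kmat set) \<times> (('k,'n) kmat \<Rightarrow> ('k,'n) kmat set)) set" where
  "inner_rel A0 = {(D, D'). D \<in> Der A0 \<and> D' \<in> Der A0 \<and>
      (\<exists>m. \<forall>a\<in>A0. \<forall>x\<in>D a. \<forall>y\<in>D' a. cos A0 (x - y) = cos A0 (a ** m - m ** a))}"

definition H1 :: "('k::field,'n::finite) kmat set \<Rightarrow> (('k,'n) kmat \<Rightarrow> ('k,'n) kmat set) set set" where
  "H1 A0 = Der A0 // inner_rel A0"

definition Rmul :: "'k::field rel_ring \<Rightarrow> 'k rel_ring \<Rightarrow> 'k rel_ring" where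
  "Rmul u v = (fst u * fst v, fst u * snd v + snd u * fst v)"

definition Runits :: "'k::field rel_ring set" where
  "Runits = {u. \<exists>v. Rmul u v = (1, 0)}"

definition radd :: "('k::field,'n::finite) rmat \<Rightarrow> ('k,'n::finite) rmat \<Rightarrow> ('k,'n) rmat" where
  "radd X Y = (fst X + fst Y, snd X + snd Y)"

definition rsub :: "('k::field,'n::finite) rmat \<Rightarrow> ('k,'n::finite) rmat \<Rightarrow> ('k,'n) rmat" where
  "rsub X Y = (fst X - fst Y, snd X - snd Y)"

definition rzero :: "('k::field,'n::finite) rmat" where
  "rzero = (0, 0)"

definition rone :: "('k::field,'n::finite) rmat" where
  "rone = (mat 1, 0)"

definition rmult :: "('k::field,'n::finite) rmat \<Rightarrow> ('k,'n::finite) rmat \<Rightarrow> ('k,'n) rmat" where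
  "rmult X Y = (fst X ** fst Y, fst X ** snd Y + snd X ** fst Y)"

definition rsc :: "'k::field rel_ring \<Rightarrow> ('k,'n::finite) rmat \<Rightarrow> ('k,'n) rmat" where
  "rsc u X = (ksc (fst u) (fst X), ksc (fst u) (snd X) + ksc (snd u) (fst X))"

definition rlincomb :: "nat \<Rightarrow> (nat \<Rightarrow> 'k::field rel_ring) \<Rightarrow> (nat \<Rightarrow> ('k,'n::finite) rmat) \<Rightarrow> ('k,'n) rmat" where
  "rlincomb m r b = foldr (\<lambda>i acc. radd (rsc (r i) (b i)) acc) [0..<m] rzero"

definition R_subalgebra :: "('k::field,'n::finite) rmat set \<Rightarrow> bool" where
  "R_subalgebra A \<longleftrightarrow> rzero \<in> A \<and> rone \<in> A \<and>
     (\<forall>x\<in>A. \<forall>y\<in>A. radd x y \<in> A \<and> rmult x y \<in> A) \<and>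
     (\<forall>u. \<forall>x\<in>A. rsc u x \<in> A)"

definition R_free_rank :: "('k::field,'n::finite) rmat set \<Rightarrow> nat \<Rightarrow> bool" where
  "R_free_rank A d \<longleftrightarrow> (\<exists>b. (\<forall>i<d. b i \<in> A) \<and>
     (\<forall>x\<in>A. \<exists>r. x = rlincomb d r b) \<and>
     (\<forall>r. rlincomb d r b = rzero \<longrightarrow> (\<forall>i<d. r i = (0, 0))))"

definition R_free_quotient :: "('k::field,'n::finite) rmat set \<Rightarrow> bool" where
  "R_free_quotient A \<longleftrightarrow> (\<exists>m c. (\<forall>x. \<exists>r. rsub x (rlincomb m r c) \<in> A) \<and>
     (\<forall>r. rlincomb m r c \<in> A \<longrightarrow> (\<forall>i<m. r i = (0, 0))))"

definition DefR :: "('k::field,'n::finite) kmat set \<Rightarrow> nat \<Rightarrow> ('k,'n) rmat set set" where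
  "DefR A0 d = {A. R_subalgebra A \<and> R_free_rank A d \<and> R_free_quotient A \<and> fst ` A = A0}"

definition GLR :: "('k::field,'n::finite) rmat set" where
  "GLR = {Q. \<exists>Q'. rmult Q Q' = rone \<and> rmult Q' Q = rone}"

definition rinv :: "('k::field,'n::finite) rmat \<Rightarrow> ('k,'n) rmat" where
  "rinv Q = (SOME Q'. rmult Q Q' = rone \<and> rmult Q' Q = rone)"

definition scalar_rel :: "(('k::field,'n::finite) rmat \<times> ('k,'n) rmat) set" where
  "scalar_rel = {(Q, Q'). Q \<in> GLR \<and> Q' \<in> GLR \<and> (\<exists>u\<in>Runits. Q' = rsc u Q)}"

definition PGLR :: "('k::field,'n::finite) rmat set set" where
  "PGLR = GLR // scalar_rel"

(* G(R): classes reducing to [I_n] in PGL_n(k) *)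
definition GR :: "('k::field,'n::finite) rmat set set" where
  "GR = {P \<in> PGLR. \<forall>Q\<in>P. \<exists>c. c \<noteq> 0 \<and> fst Q = ksc c (mat 1)}"

definition conjR :: "('k::field,'n::finite) rmat \<Rightarrow> ('k,'n) rmat set \<Rightarrow> ('k,'n) rmat set" where
  "conjR Q A = (\<lambda>X. rmult (rinv Q) (rmult X Q)) ` A"

definition orbit_rel :: "('k::field,'n::finite) kmat set \<Rightarrow> nat \<Rightarrow> (('k,'n) rmat set \<times> ('k,'n) rmat set) set" where
  "orbit_rel A0 d = {(A, A'). A \<in> DefR A0 d \<and> A' \<in> DefR A0 d \<and>
      (\<exists>P\<in>GR. \<exists>Q\<in>P. A' = conjR Q A)}"

end

theory Submission
  imports Defs
begin


lemma ksc_add_right: "ksc c (X + Y) = ksc c X + ksc c Y"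
  by (simp add: ksc_def vec_eq_iff distrib_left)
lemma ksc_add_left: "ksc (a + b) X = ksc a X + ksc b X"
  by (simp add: ksc_def vec_eq_iff distrib_right)
lemma ksc_ksc[simp]: "ksc a (ksc b X) = ksc (a * b) X"
  by (simp add: ksc_def vec_eq_iff mult.assoc)
lemma ksc_one[simp]: "ksc 1 X = X"
  by (simp add: ksc_def vec_eq_iff)
lemma ksc_zero[simp]: "ksc 0 X = 0"
  by (simp add: ksc_def vec_eq_iff)
lemma ksc_zero_right[simp]: "ksc c 0 = 0"
  by (simp add: ksc_def vec_eq_iff)
lemma ksc_minus_right: "ksc c (- X) = - ksc c X"
  by (simp add: ksc_def vec_eq_iff)
lemma ksc_diff_right: "ksc c (X - Y) = ksc c X - ksc c Y"
  by (simp add: ksc_def vec_eq_iff right_diff_distrib)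
lemma ksc_minus_left: "ksc (- c) X = - ksc c X"
  by (simp add: ksc_def vec_eq_iff)
lemma ksc_mult_left: "ksc c X ** Y = ksc c (X ** Y)"
  by (simp add: ksc_def vec_eq_iff matrix_matrix_mult_def sum_distrib_left mult.assoc)
lemma ksc_mult_right: "X ** ksc c Y = ksc c (X ** Y)"
  by (simp add: ksc_def vec_eq_iff matrix_matrix_mult_def sum_distrib_left mult.left_commute)
lemma ksc_sum: "ksc c (sum f S) = sum (\<lambda>i. ksc c (f i)) S"
  by (induction S rule: infinite_finite_induct) (auto simp: ksc_add_right)
lemma sum_ksc_left: "sum (\<lambda>i. ksc (f i) X) S = ksc (sum f S) X"
  by (induction S rule: infinite_finite_induct) (auto simp: ksc_add_left)
lemma ksc_mat1_mult[simp]: "ksc c (mat 1) ** X = ksc c X" by (simp add: ksc_mult_left)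
lemma mult_ksc_mat1[simp]: "X ** ksc c (mat 1) = ksc c X" by (simp add: ksc_mult_right)
lemma matrix_minus_ldistrib: "(A::('k::field,'n::finite) kmat) ** (- B) = - (A ** B)"
  by (simp add: vec_eq_iff matrix_matrix_mult_def sum_negf)
lemma matrix_minus_rdistrib: "(- A::('k::field,'n::finite) kmat) ** B = - (A ** B)"
  by (simp add: vec_eq_iff matrix_matrix_mult_def sum_negf)
lemma matrix_diff_ldistrib: "(A::('k::field,'n::finite) kmat) ** (B - C) = A ** B - A ** C"
  by (simp add: vec_eq_iff matrix_matrix_mult_def sum_subtractf right_diff_distrib)
lemma matrix_diff_rdistrib: "((A::('k::field,'n::finite) kmat) - B) ** C = A ** C - B ** C"
  by (simp add: vec_eq_iff matrix_matrix_mult_def sum_subtractf left_diff_distrib)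
lemma matrix_add_rdistrib': "((A::('k::field,'n::finite) kmat) + B) ** C = A ** C + B ** C"
  by (simp add: vec_eq_iff matrix_matrix_mult_def sum.distrib distrib_right)

interpretation kv: vector_space "ksc :: 'k::field \<Rightarrow> ('k,'n::finite) kmat \<Rightarrow> ('k,'n) kmat"
  by unfold_locales (auto simp: ksc_add_right ksc_add_left)

lemma foldr_radd: "foldr (\<lambda>i acc. radd (g i) acc) xs rzero
   = (sum_list (map (\<lambda>i. fst (g i)) xs), sum_list (map (\<lambda>i. snd (g i)) xs))"
  by (induction xs) (auto simp: radd_def rzero_def)

lemma rlincomb_eq: "rlincomb m r b =
   ((\<Sum>i<m. ksc (fst (r i)) (fst (b i))),
    (\<Sum>i<m. ksc (fst (r i)) (snd (b i)) + ksc (snd (r i)) (fst (b i))))"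
  unfolding rlincomb_def foldr_radd
  by (simp add: rsc_def sum_list_distinct_conv_sum_set atLeast0LessThan)



lemma ksc_if: "ksc (if P then a else b) X = (if P then ksc a X else ksc b X)" by simp

lemma fam_inj:
  fixes \<beta> :: "nat \<Rightarrow> ('k::field,'n::finite) kmat"
  assumes ind: "\<forall>c. (\<Sum>i<d. ksc (c i) (\<beta> i)) = 0 \<longrightarrow> (\<forall>i<d. c i = 0)"
  shows "inj_on \<beta> {..<d}"
proof (rule inj_onI, rule ccontr)
  fix i j assume ij: "i \<in> {..<d}" "j \<in> {..<d}" "\<beta> i = \<beta> j" "i \<noteq> j"
  define c where "c t = (if t = i then 1 else if t = j then -1 else (0::'k))" for t
  have "\<And>t. ksc (c t) (\<beta> t) = (if t = i then \<beta> i else 0) + (if t = j then - \<beta> j else 0)"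
    using ij by (auto simp: c_def ksc_minus_left)
  then have "(\<Sum>t<d. ksc (c t) (\<beta> t)) = \<beta> i - \<beta> j"
    using ij by (simp add: sum.distrib)
  then have "c i = 0" using ind ij by auto
  then show False by (simp add: c_def)
qed

lemma fam_indep:
  fixes \<beta> :: "nat \<Rightarrow> ('k::field,'n::finite) kmat"
  assumes ind: "\<forall>c. (\<Sum>i<d. ksc (c i) (\<beta> i)) = 0 \<longrightarrow> (\<forall>i<d. c i = 0)"
  shows "kv.independent (\<beta> ` {..<d})"
  unfolding kv.independent_explicit_module
proof (intro allI impI)
  fix t u v assume t: "finite t" "t \<subseteq> \<beta> ` {..<d}" "(\<Sum>v\<in>t. ksc (u v) v) = 0" "v \<in> t"
  have inj: "inj_on \<beta> {..<d}" by (rule fam_inj[OF ind])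
  define c where "c i = (if \<beta> i \<in> t then u (\<beta> i) else 0)" for i
  let ?I = "{i\<in>{..<d}. \<beta> i \<in> t}"
  have "(\<Sum>i<d. ksc (c i) (\<beta> i)) = (\<Sum>i\<in>?I. ksc (u (\<beta> i)) (\<beta> i))"
    by (auto simp: c_def split: if_splits intro!: sum.mono_neutral_cong_right)
  also have "\<dots> = (\<Sum>v\<in>\<beta> ` ?I. ksc (u v) v)"
    by (rule sum.reindex[symmetric, unfolded comp_def]) (rule inj_on_subset[OF inj], auto)
  also have "\<beta> ` ?I = t" using t by auto
  finally have "(\<Sum>i<d. ksc (c i) (\<beta> i)) = 0" using t by simp
  then have c0: "\<forall>i<d. c i = 0" using ind by blast
  obtain i where "i < d" "v = \<beta> i" using t by auto
  then show "u v = 0" using c0 t by (auto simp: c_def)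
qed

lemma fam_in_span:
  fixes \<beta> :: "nat \<Rightarrow> ('k::field,'n::finite) kmat"
  shows "(\<Sum>i<d. ksc (c i) (\<beta> i)) \<in> kv.span (\<beta> ` {..<d})"
  by (intro kv.span_sum kv.span_scale kv.span_base) auto

lemma spanning_indep:
  fixes \<beta> b0 :: "nat \<Rightarrow> ('k::field,'n::finite) kmat"
  assumes ind: "\<forall>c. (\<Sum>i<d. ksc (c i) (\<beta> i)) = 0 \<longrightarrow> (\<forall>i<d. c i = 0)"
    and bA: "\<forall>i<d. \<beta> i \<in> A0"
    and sp: "\<forall>x\<in>A0. \<exists>c. x = (\<Sum>i<d. ksc (c i) (b0 i))"
  shows "\<forall>c. (\<Sum>i<d. ksc (c i) (b0 i)) = 0 \<longrightarrow> (\<forall>i<d. c i = 0)"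
proof -
  let ?S = "b0 ` {..<d}" and ?B = "\<beta> ` {..<d}"
  have indB: "kv.independent ?B" by (rule fam_indep[OF ind])
  have cardB: "card ?B = d" using fam_inj[OF ind] by (simp add: card_image)
  have A0sp: "A0 \<subseteq> kv.span ?S" using sp fam_in_span by fastforce
  have BS: "?B \<subseteq> kv.span ?S" using A0sp bA by auto
  have "card ?B \<le> card ?S" using kv.independent_span_bound[OF _ indB BS] by auto
  moreover have "card ?S \<le> d" using card_image_le[of "{..<d}" b0] by simp
  ultimately have cS: "card ?S = d" using cardB by simp
  have injS: "inj_on b0 {..<d}" by (rule eq_card_imp_inj_on) (use cS in auto)
  have indS: "kv.independent ?S"
  proof
    assume "kv.dependent ?S"
    then obtain a where a: "a \<in> ?S" "a \<in> kv.span (?S - {a})" unfolding kv.dependent_def by blast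
    have "kv.span ?S = kv.span (?S - {a})"
      using kv.span_redundant[OF a(2)] a(1) by (simp add: insert_absorb)
    then have "?B \<subseteq> kv.span (?S - {a})" using BS by simp
    then have "card ?B \<le> card (?S - {a})" using kv.independent_span_bound[OF _ indB] by auto
    also have "\<dots> < d" proof -
      have "d > 0" using a(1) by auto
      then show ?thesis using a(1) cS by (simp add: card_Diff1_less_iff)
    qed
    finally show False using cardB by simp
  qed
  show ?thesis
  proof (intro allI impI)
    fix c i assume h: "(\<Sum>i<d. ksc (c i) (b0 i)) = 0" "i < d"
    define u where "u v = c (inv_into {..<d} b0 v)" for v
    have "(\<Sum>v\<in>?S. ksc (u v) v) = (\<Sum>j<d. ksc (u (b0 j)) (b0 j))"
      by (rule sum.reindex[unfolded comp_def]) (rule injS)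
    also have "\<dots> = (\<Sum>j<d. ksc (c j) (b0 j))"
      by (rule sum.cong) (auto simp: u_def inv_into_f_f[OF injS])
    finally have "(\<Sum>v\<in>?S. ksc (u v) v) = 0" using h by simp
    then have "u (b0 i) = 0" using kv.independentD[OF indS, of ?S u "b0 i"] h by auto
    then show "c i = 0" using h by (simp add: u_def inv_into_f_f[OF injS])
  qed
qed

definition Emat :: "'n \<Rightarrow> 'n \<Rightarrow> ('k::field,'n::finite) kmat" where
  "Emat a b = (\<chi> i j. if i = a \<and> j = b then 1 else 0)"

lemma Emat_span: "(X::('k::field,'n::finite) kmat) \<in> kv.span (range (case_prod Emat))"
proof -
  have "X = (\<Sum>p\<in>UNIV. ksc (X $ fst p $ snd p) (case_prod Emat p))"
  proof -
    have "(\<Sum>p\<in>UNIV. ksc (X $ fst p $ snd p) (case_prod Emat p)) $ i $ j = X $ i $ j" for i j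
    proof -
      have "(\<Sum>p\<in>UNIV. ksc (X $ fst p $ snd p) (case_prod Emat p)) $ i $ j
          = (\<Sum>p\<in>UNIV. if p = (i,j) then X $ i $ j else 0)"
        unfolding sum_component by (rule sum.cong) (auto simp: ksc_def Emat_def split: prod.splits)
      also have "\<dots> = X $ i $ j" by simp
      finally show ?thesis .
    qed
    then show ?thesis by (simp add: vec_eq_iff)
  qed
  also have "\<dots> \<in> kv.span (range (case_prod Emat))"
    by (intro kv.span_sum kv.span_scale kv.span_base) auto
  finally show ?thesis .
qed

lemma complement:
  fixes \<beta> :: "nat \<Rightarrow> ('k::field,'n::finite) kmat"
  assumes ind: "\<forall>c. (\<Sum>i<d. ksc (c i) (\<beta> i)) = 0 \<longrightarrow> (\<forall>i<d. c i = 0)"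
    and A0eq: "A0 = kv.span (\<beta> ` {..<d})"
  obtains m and h :: "nat \<Rightarrow> ('k,'n) kmat" where
    "\<forall>x. \<exists>p. x - (\<Sum>i<m. ksc (p i) (h i)) \<in> A0"
    "\<forall>p. (\<Sum>i<m. ksc (p i) (h i)) \<in> A0 \<longrightarrow> (\<forall>i<m. p i = 0)"
proof -
  let ?B = "\<beta> ` {..<d}"
  define E where "E = kv.extend_basis ?B"
  have indB: "kv.independent ?B" by (rule fam_indep[OF ind])
  have BE: "?B \<subseteq> E" and indE: "kv.independent E" and spE: "kv.span E = UNIV"
    using kv.extend_basis_superset[OF indB] kv.independent_extend_basis[OF indB]
      kv.span_extend_basis[OF indB] by (auto simp: E_def)
  have finE: "finite E"
    using kv.independent_span_bound[OF _ indE, of "range (case_prod Emat)"] Emat_span by auto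
  define C where "C = E - ?B"
  have finC: "finite C" using finE by (simp add: C_def)
  obtain h where h: "bij_betw h {0..<card C} C" using ex_bij_betw_nat_finite[OF finC] by blast
  define m where "m = card C"
  have hb: "bij_betw h {..<m} C" using h by (simp add: m_def atLeast0LessThan)
  have injh: "inj_on h {..<m}" and imh: "h ` {..<m} = C" using hb by (auto simp: bij_betw_def)
  have EBC: "E = ?B \<union> C" using BE by (auto simp: C_def)
  have reidx: "(\<Sum>v\<in>C. ksc (w v) v) = (\<Sum>i<m. ksc (w (h i)) (h i))" for w
    using sum.reindex[OF injh, of "\<lambda>v. ksc (w v) v"] imh by simp
  show ?thesis
  proof (rule that)
    show "\<forall>x. \<exists>p. x - (\<Sum>i<m. ksc (p i) (h i)) \<in> A0"
    proof
      fix x :: "('k,'n) kmat"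
      have "x \<in> kv.span (?B \<union> C)" using spE EBC by simp
      then obtain y z where yz: "x = y + z" "y \<in> kv.span ?B" "z \<in> kv.span C"
        unfolding kv.span_Un by blast
      obtain w where "z = (\<Sum>v\<in>C. ksc (w v) v)" using yz(3) kv.span_finite[OF finC] by auto
      then have "z = (\<Sum>i<m. ksc (w (h i)) (h i))" using reidx by simp
      then show "\<exists>p. x - (\<Sum>i<m. ksc (p i) (h i)) \<in> A0"
        using yz A0eq by (intro exI[of _ "\<lambda>i. w (h i)"]) simp
    qed
    show "\<forall>p. (\<Sum>i<m. ksc (p i) (h i)) \<in> A0 \<longrightarrow> (\<forall>i<m. p i = 0)"
    proof (intro allI impI)
      fix p i assume pA: "(\<Sum>i<m. ksc (p i) (h i)) \<in> A0" and i: "i < m"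
      obtain u where u: "(\<Sum>i<m. ksc (p i) (h i)) = (\<Sum>v\<in>?B. ksc (u v) v)"
        using pA A0eq kv.span_finite[of ?B] by auto
      define w where "w v = p (inv_into {..<m} h v)" for v
      have wC: "(\<Sum>v\<in>C. ksc (w v) v) = (\<Sum>i<m. ksc (p i) (h i))"
        unfolding reidx by (rule sum.cong) (auto simp: w_def inv_into_f_f[OF injh])
      define f where "f v = (if v \<in> C then w v else - u v)" for v
      have disj: "?B \<inter> C = {}" by (auto simp: C_def)
      have "(\<Sum>v\<in>E. ksc (f v) v) = (\<Sum>v\<in>?B. ksc (f v) v) + (\<Sum>v\<in>C. ksc (f v) v)"
        unfolding EBC by (rule sum.union_disjoint) (use finC disj in auto)
      also have "(\<Sum>v\<in>?B. ksc (f v) v) = - (\<Sum>v\<in>?B. ksc (u v) v)"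
      proof -
        have "(\<Sum>v\<in>?B. ksc (f v) v) = (\<Sum>v\<in>?B. - ksc (u v) v)"
          using disj by (intro sum.cong) (auto simp: f_def ksc_minus_left)
        then show ?thesis by (simp add: sum_negf)
      qed
      also have "(\<Sum>v\<in>C. ksc (f v) v) = (\<Sum>v\<in>C. ksc (w v) v)"
        by (auto simp: f_def intro!: sum.cong)
      finally have "(\<Sum>v\<in>E. ksc (f v) v) = 0" using wC u by simp
      then have "f (h i) = 0" using kv.independentD[OF indE finE, of f "h i"] imh i EBC by auto
      moreover have "h i \<in> C" using imh i by auto
      ultimately show "p i = 0" by (simp add: f_def w_def inv_into_f_f[OF injh] i)
    qed
  qed
qed



definition gA :: "('k::field,'n::finite) kmat set \<Rightarrow> (('k,'n) kmat \<Rightarrow> ('k,'n) kmat set) \<Rightarrow> ('k,'n) rmat set" where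
  "gA A0 D = {(a,y). a \<in> A0 \<and> y \<in> D a}"

locale setting =
  fixes A0 :: "('k::field,'n::finite) kmat set" and d :: nat
  assumes sub: "k_subalgebra A0" and kd: "k_dim A0 d"
begin

lemma A0_0: "0 \<in> A0" and A0_1: "mat 1 \<in> A0"
  and A0_add: "x \<in> A0 \<Longrightarrow> y \<in> A0 \<Longrightarrow> x + y \<in> A0"
  and A0_mult: "x \<in> A0 \<Longrightarrow> y \<in> A0 \<Longrightarrow> x ** y \<in> A0"
  and A0_sc: "x \<in> A0 \<Longrightarrow> ksc c x \<in> A0"
  using sub by (auto simp: k_subalgebra_def)

lemma A0_neg: "x \<in> A0 \<Longrightarrow> - x \<in> A0"
  using A0_sc[of x "-1"] by (simp add: ksc_minus_left)
lemma A0_diff: "x \<in> A0 \<Longrightarrow> y \<in> A0 \<Longrightarrow> x - y \<in> A0"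
proof -
  assume "x \<in> A0" "y \<in> A0"
  then have "x + (- y) \<in> A0" using A0_add A0_neg by blast
  then show ?thesis by simp
qed
lemma A0_sum: "(\<And>i. i \<in> S \<Longrightarrow> f i \<in> A0) \<Longrightarrow> sum f S \<in> A0"
  by (induction S rule: infinite_finite_induct) (auto intro: A0_0 A0_add)

lemma A0_subspace: "kv.subspace A0"
  unfolding kv.subspace_def using A0_0 A0_add A0_sc by blast

lemma cos_mem: "y \<in> Defs.cos A0 p \<longleftrightarrow> y - p \<in> A0" by (simp add: Defs.cos_def)
lemma cos_eq: "Defs.cos A0 p = Defs.cos A0 q \<longleftrightarrow> p - q \<in> A0"
proof
  assume "Defs.cos A0 p = Defs.cos A0 q"
  moreover have "p \<in> Defs.cos A0 p" by (simp add: cos_mem A0_0)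
  ultimately have "p \<in> Defs.cos A0 q" by simp
  then show "p - q \<in> A0" by (simp add: cos_mem)
next
  assume h: "p - q \<in> A0"
  show "Defs.cos A0 p = Defs.cos A0 q"
  proof (auto simp: cos_mem)
    fix x assume "x - p \<in> A0" then have "(x - p) + (p - q) \<in> A0" using h A0_add by blast
    then show "x - q \<in> A0" by simp
  next
    fix x assume "x - q \<in> A0" then have "(x - q) - (p - q) \<in> A0" using h A0_diff by blast
    then show "x - p \<in> A0" by simp
  qed
qed
lemma cos_self: "p \<in> Defs.cos A0 p" by (simp add: cos_mem A0_0)
lemma cos_of_mem: "x \<in> Defs.cos A0 p \<Longrightarrow> Defs.cos A0 x = Defs.cos A0 p"
  by (simp add: cos_mem cos_eq)

lemma kdim_obtain:
  obtains \<beta> where "\<forall>i<d. \<beta> i \<in> A0" "\<forall>x\<in>A0. \<exists>c. x = (\<Sum>i<d. ksc (c i) (\<beta> i))"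
    "\<forall>c. (\<Sum>i<d. ksc (c i) (\<beta> i)) = 0 \<longrightarrow> (\<forall>i<d. c i = 0)"
  using kd unfolding k_dim_def by blast

lemma A0_span: 
  assumes "\<forall>i<d. \<beta> i \<in> A0" "\<forall>x\<in>A0. \<exists>c. x = (\<Sum>i<d. ksc (c i) (\<beta> i))"
  shows "A0 = kv.span (\<beta> ` {..<d})"
proof
  show "A0 \<subseteq> kv.span (\<beta> ` {..<d})" using assms(2) fam_in_span by fastforce
  show "kv.span (\<beta> ` {..<d}) \<subseteq> A0" using assms(1) A0_subspace by (intro kv.span_minimal) auto
qed

end

context setting begin

lemma Der_D: assumes "D \<in> Der A0" "a \<in> A0"
  shows "\<exists>x. D a = Defs.cos A0 x"
proof -
  have "D a \<in> quotmod A0" using assms unfolding Der_def by blast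
  then show ?thesis unfolding quotmod_def by blast
qed

lemma Der_ne: assumes "D \<in> Der A0" "a \<in> A0" obtains x where "x \<in> D a"
  using Der_D[OF assms] cos_self by blast

lemma Der_cos: assumes "D \<in> Der A0" "a \<in> A0" "x \<in> D a" shows "D a = Defs.cos A0 x"
  using Der_D[OF assms(1,2)] assms(3) cos_of_mem by metis

lemma Der_out: "D \<in> Der A0 \<Longrightarrow> a \<notin> A0 \<Longrightarrow> D a = {}"
  by (auto simp: Der_def)

lemma Der_lin: assumes "D \<in> Der A0" "a \<in> A0" "b \<in> A0" "x \<in> D a" "y \<in> D b"
  shows "ksc c x + y \<in> D (ksc c a + b)"
proof -
  have "D (ksc c a + b) = Defs.cos A0 (ksc c x + y)" using assms by (auto simp: Der_def)
  then show ?thesis using cos_self by simp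
qed

lemma Der_mult: assumes "D \<in> Der A0" "a \<in> A0" "b \<in> A0" "x \<in> D a" "y \<in> D b"
  shows "a ** y + x ** b \<in> D (a ** b)"
proof -
  have "D (a ** b) = Defs.cos A0 (a ** y + x ** b)" using assms by (auto simp: Der_def)
  then show ?thesis using cos_self by simp
qed

lemma Der_0: assumes "D \<in> Der A0" shows "D 0 = A0"
proof -
  obtain x where x: "x \<in> D 0" using Der_ne[OF assms A0_0] .
  have "0 \<in> D 0" using Der_mult[OF assms A0_0 A0_0 x x] by simp
  then have "D 0 = Defs.cos A0 0" using Der_cos[OF assms A0_0] by blast
  then show ?thesis by (auto simp: Defs.cos_def)
qed

lemma Der_1: assumes "D \<in> Der A0" shows "0 \<in> D (mat 1)"
proof -
  obtain x where x: "x \<in> D (mat 1)" using Der_ne[OF assms A0_1] .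
  have "mat 1 ** x + x ** mat 1 \<in> D (mat 1 ** mat 1)" by (rule Der_mult[OF assms A0_1 A0_1 x x])
  then have "x + x \<in> Defs.cos A0 x" using Der_cos[OF assms A0_1 x] by simp
  then have "x \<in> A0" by (simp add: cos_mem)
  then show ?thesis using Der_cos[OF assms A0_1 x] by (simp add: cos_mem A0_neg)
qed

lemma Der_shift: assumes "D \<in> Der A0" "a \<in> A0" "x \<in> D a" "z \<in> A0" shows "x + z \<in> D a"
  using Der_cos[OF assms(1-3)] assms(4) by (simp add: cos_mem)

lemma Der_sc: assumes "D \<in> Der A0" "a \<in> A0" "x \<in> D a" shows "ksc c x \<in> D (ksc c a)"
  using Der_lin[OF assms(1,2) A0_0 assms(3), of 0 c] Der_0[OF assms(1)] A0_0 by simp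

lemma Der_sum: assumes "D \<in> Der A0" "\<forall>i<(n::nat). \<beta> i \<in> A0 \<and> yy i \<in> D (\<beta> i)"
  shows "(\<Sum>i<n. ksc (c i) (yy i)) \<in> D (\<Sum>i<n. ksc (c i) (\<beta> i))"
  using assms(2)
proof (induction n)
  case 0 then show ?case using Der_0[OF assms(1)] A0_0 by simp
next
  case (Suc n)
  have "ksc (c n) (yy n) + (\<Sum>i<n. ksc (c i) (yy i)) \<in> D (ksc (c n) (\<beta> n) + (\<Sum>i<n. ksc (c i) (\<beta> i)))"
    using Suc by (intro Der_lin[OF assms(1)]) (auto intro!: A0_sum A0_sc)
  then show ?case by (simp add: add.commute)
qed

lemma gA_mem: "(a, y) \<in> gA A0 D \<longleftrightarrow> a \<in> A0 \<and> y \<in> D a" by (simp add: gA_def)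

lemma gA_subalg: assumes D: "D \<in> Der A0" shows "R_subalgebra (gA A0 D)"
  unfolding R_subalgebra_def
proof (intro conjI ballI allI)
  show "rzero \<in> gA A0 D" using Der_0[OF D] A0_0 by (simp add: rzero_def gA_mem)
  show "rone \<in> gA A0 D" using Der_1[OF D] A0_1 by (simp add: rone_def gA_mem)
  fix X Y assume X: "X \<in> gA A0 D" and Y: "Y \<in> gA A0 D"
  obtain a x where ax: "X = (a, x)" "a \<in> A0" "x \<in> D a" using X by (cases X) (auto simp: gA_mem)
  obtain b y where " Y = (b, y)" "b \<in> A0" "y \<in> D b" using Y by (cases Y) (auto simp: gA_mem)
  note by' = this
  show "radd X Y \<in> gA A0 D"
    using Der_lin[OF D ax(2) by'(2) ax(3) by'(3), of 1] ax by' A0_add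
    by (simp add: radd_def gA_mem)
  show "rmult X Y \<in> gA A0 D"
    using Der_mult[OF D ax(2) by'(2) ax(3) by'(3)] ax by' A0_mult
    by (simp add: rmult_def gA_mem)
next
  fix u X assume X: "X \<in> gA A0 D"
  obtain a x where ax: "X = (a, x)" "a \<in> A0" "x \<in> D a" using X by (cases X) (auto simp: gA_mem)
  have "ksc (fst u) x + ksc (snd u) a \<in> D (ksc (fst u) a)"
    by (rule Der_shift[OF D A0_sc[OF ax(2)] Der_sc[OF D ax(2,3)] A0_sc[OF ax(2)]])
  then show "rsc u X \<in> gA A0 D" using ax A0_sc by (simp add: rsc_def gA_mem)
qed

lemma gA_fst: assumes D: "D \<in> Der A0" shows "fst ` gA A0 D = A0"
proof
  show "fst ` gA A0 D \<subseteq> A0" by (auto simp: gA_def)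
  show "A0 \<subseteq> fst ` gA A0 D"
  proof
    fix a assume a: "a \<in> A0"
    obtain x where "x \<in> D a" using Der_ne[OF D a] .
    then have "(a, x) \<in> gA A0 D" using a by (simp add: gA_mem)
    then show "a \<in> fst ` gA A0 D" by force
  qed
qed

lemma gA_rank: assumes D: "D \<in> Der A0" shows "R_free_rank (gA A0 D) d"
proof -
  obtain \<beta> where bA: "\<forall>i<d. \<beta> i \<in> A0" and bsp: "\<forall>x\<in>A0. \<exists>c. x = (\<Sum>i<d. ksc (c i) (\<beta> i))"
    and bind: "\<forall>c. (\<Sum>i<d. ksc (c i) (\<beta> i)) = 0 \<longrightarrow> (\<forall>i<d. c i = 0)" by (rule kdim_obtain)
  define yy where "yy i = (SOME y. y \<in> D (\<beta> i))" for i
  have yy: "yy i \<in> D (\<beta> i)" if "i < d" for i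
    using Der_ne[OF D] bA that unfolding yy_def by (metis someI)
  define b where "b i = (\<beta> i, yy i)" for i
  show ?thesis unfolding R_free_rank_def
  proof (intro exI[of _ b] conjI allI impI ballI)
    show "i < d \<Longrightarrow> b i \<in> gA A0 D" for i using bA yy by (simp add: b_def gA_mem)
  next
    fix X assume X: "X \<in> gA A0 D"
    obtain a y where ay: "X = (a, y)" "a \<in> A0" "y \<in> D a" using X by (cases X) (auto simp: gA_mem)
    obtain c where c: "a = (\<Sum>i<d. ksc (c i) (\<beta> i))" using bsp ay by blast
    have s: "(\<Sum>i<d. ksc (c i) (yy i)) \<in> D a" using Der_sum[OF D] bA yy c by auto
    then have "y - (\<Sum>i<d. ksc (c i) (yy i)) \<in> A0" using Der_cos[OF D ay(2) s] ay(3) by (simp add: cos_mem)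
    then obtain e where e: "y - (\<Sum>i<d. ksc (c i) (yy i)) = (\<Sum>i<d. ksc (e i) (\<beta> i))" using bsp by blast
    have "rlincomb d (\<lambda>i. (c i, e i)) b = (a, y)"
      unfolding rlincomb_eq using c e by (simp add: b_def sum.distrib algebra_simps)
    then show "\<exists>r. X = rlincomb d r b" using ay by metis
  next
    fix r i assume r: "rlincomb d r b = rzero" and i: "i < d"
    have f0: "(\<Sum>i<d. ksc (fst (r i)) (\<beta> i)) = 0" using r by (simp add: rlincomb_eq rzero_def b_def)
    then have fz: "\<forall>i<d. fst (r i) = 0" using spec[OF bind, of "\<lambda>i. fst (r i)"] by simp
    have "(\<Sum>i<d. ksc (fst (r i)) (yy i) + ksc (snd (r i)) (\<beta> i)) = 0"
      using r by (simp add: rlincomb_eq rzero_def b_def)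
    moreover have "(\<Sum>i<d. ksc (fst (r i)) (yy i) + ksc (snd (r i)) (\<beta> i)) = (\<Sum>i<d. ksc (snd (r i)) (\<beta> i))"
      using fz by (intro sum.cong) auto
    ultimately have "\<forall>i<d. snd (r i) = 0" using spec[OF bind, of "\<lambda>i. snd (r i)"] by simp
    then show "r i = (0, 0)" using fz i by (simp add: prod_eq_iff)
  qed
qed

lemma gA_quot: assumes D: "D \<in> Der A0" shows "R_free_quotient (gA A0 D)"
proof -
  obtain \<beta> where bA: "\<forall>i<d. \<beta> i \<in> A0" and bsp: "\<forall>x\<in>A0. \<exists>c. x = (\<Sum>i<d. ksc (c i) (\<beta> i))"
    and bind: "\<forall>c. (\<Sum>i<d. ksc (c i) (\<beta> i)) = 0 \<longrightarrow> (\<forall>i<d. c i = 0)" by (rule kdim_obtain)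
  obtain m and h :: "nat \<Rightarrow> ('k,'n) kmat" where hsp: "\<forall>x. \<exists>p. x - (\<Sum>i<m. ksc (p i) (h i)) \<in> A0"
    and hind: "\<forall>p. (\<Sum>i<m. ksc (p i) (h i)) \<in> A0 \<longrightarrow> (\<forall>i<m. p i = 0)"
    by (rule complement[OF bind A0_span[OF bA bsp]])
  define c where "c i = (h i, 0::('k,'n) kmat)" for i
  have rl: "rlincomb m r c = ((\<Sum>i<m. ksc (fst (r i)) (h i)), (\<Sum>i<m. ksc (snd (r i)) (h i)))" for r
    by (simp add: rlincomb_eq c_def)
  show ?thesis unfolding R_free_quotient_def
  proof (intro exI[of _ m] exI[of _ c] conjI allI impI)
    fix X :: "('k,'n) rmat"
    obtain p where p: "fst X - (\<Sum>i<m. ksc (p i) (h i)) \<in> A0" using hsp by blast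
    define a1 where "a1 = fst X - (\<Sum>i<m. ksc (p i) (h i))"
    obtain y1 where y1: "y1 \<in> D a1" using Der_ne[OF D] p a1_def by blast
    obtain q where q: "(snd X - y1) - (\<Sum>i<m. ksc (q i) (h i)) \<in> A0" using hsp by blast
    have "rsub X (rlincomb m (\<lambda>i. (p i, q i)) c) = (a1, y1 + ((snd X - y1) - (\<Sum>i<m. ksc (q i) (h i))))"
      by (simp add: rl rsub_def a1_def)
    moreover have "y1 + ((snd X - y1) - (\<Sum>i<m. ksc (q i) (h i))) \<in> D a1"
      using Der_shift[OF D _ y1 q] p a1_def by simp
    ultimately have "rsub X (rlincomb m (\<lambda>i. (p i, q i)) c) \<in> gA A0 D" using p a1_def
      by (simp only: gA_mem)
    then show "\<exists>r. rsub X (rlincomb m r c) \<in> gA A0 D" by blast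
  next
    fix r i assume r: "rlincomb m r c \<in> gA A0 D" and i: "i < m"
    have f: "(\<Sum>i<m. ksc (fst (r i)) (h i)) \<in> A0" using r by (simp add: rl gA_mem)
    then have fz: "\<forall>i<m. fst (r i) = 0" using spec[OF hind, of "\<lambda>i. fst (r i)"] by simp
    have "(\<Sum>i<m. ksc (fst (r i)) (h i)) = 0" using fz by simp
    then have "(\<Sum>i<m. ksc (snd (r i)) (h i)) \<in> D 0" using r by (simp add: rl gA_mem)
    then have "\<forall>i<m. snd (r i) = 0" using Der_0[OF D] spec[OF hind, of "\<lambda>i. snd (r i)"] by auto
    then show "r i = (0, 0)" using fz i by (simp add: prod_eq_iff)
  qed
qed

lemma gA_DefR: "D \<in> Der A0 \<Longrightarrow> gA A0 D \<in> DefR A0 d"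
  using gA_subalg gA_rank gA_quot gA_fst by (simp add: DefR_def)


lemma gA_inj: "inj_on (gA A0) (Der A0)"
proof (rule inj_onI)
  fix D D' assume D: "D \<in> Der A0" and D': "D' \<in> Der A0" and eq: "gA A0 D = gA A0 D'"
  show "D = D'"
  proof
    fix a show "D a = D' a"
    proof (cases "a \<in> A0")
      case True
      have "D a = {y. (a, y) \<in> gA A0 D}" using True by (simp add: gA_mem)
      also have "\<dots> = D' a" using True eq by (simp add: gA_mem)
      finally show ?thesis .
    next
      case False then show ?thesis using Der_out[OF D] Der_out[OF D'] by simp
    qed
  qed
qed

lemma DefR_surj: assumes A: "A \<in> DefR A0 d" shows "\<exists>D\<in>Der A0. A = gA A0 D"
proof -
  have sA: "R_subalgebra A" and rk: "R_free_rank A d" and fA: "fst ` A = A0"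
    using A by (auto simp: DefR_def)
  have radd: "X \<in> A \<Longrightarrow> Y \<in> A \<Longrightarrow> radd X Y \<in> A"
   and rmult: "X \<in> A \<Longrightarrow> Y \<in> A \<Longrightarrow> rmult X Y \<in> A"
    for X Y using sA by (auto simp: R_subalgebra_def)
  have rsc: "X \<in> A \<Longrightarrow> rsc u X \<in> A" for X u using sA unfolding R_subalgebra_def by blast
  obtain b where bA: "\<forall>i<d. b i \<in> A" and bsp: "\<forall>x\<in>A. \<exists>r. x = rlincomb d r b"
    using rk by (auto simp: R_free_rank_def)
  obtain \<beta> where bbA: "\<forall>i<d. \<beta> i \<in> A0" and bbsp: "\<forall>x\<in>A0. \<exists>c. x = (\<Sum>i<d. ksc (c i) (\<beta> i))"
    and bbind: "\<forall>c. (\<Sum>i<d. ksc (c i) (\<beta> i)) = 0 \<longrightarrow> (\<forall>i<d. c i = 0)" by (rule kdim_obtain)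
  define b0 where "b0 i = fst (b i)" for i
  have b0A: "\<forall>i<d. b0 i \<in> A0" using bA fA by (auto simp: b0_def)
  have b0sp: "\<forall>x\<in>A0. \<exists>c. x = (\<Sum>i<d. ksc (c i) (b0 i))"
  proof
    fix x assume "x \<in> A0"
    then obtain z where z: "z \<in> A" "x = fst z" using fA by auto
    then obtain r where "z = rlincomb d r b" using bsp by blast
    then have "x = (\<Sum>i<d. ksc (fst (r i)) (b0 i))" using z by (simp add: rlincomb_eq b0_def)
    then show "\<exists>c. x = (\<Sum>i<d. ksc (c i) (b0 i))" by (rule exI[of _ "\<lambda>i. fst (r i)"])
  qed
  have b0ind: "\<forall>c. (\<Sum>i<d. ksc (c i) (b0 i)) = 0 \<longrightarrow> (\<forall>i<d. c i = 0)"
    by (rule spanning_indep[OF bbind bbA b0sp])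
  have ker: "(0, y) \<in> A \<longleftrightarrow> y \<in> A0" for y
  proof
    assume "(0, y) \<in> A"
    then obtain r where r: "(0, y) = rlincomb d r b" using bsp by blast
    then have "(\<Sum>i<d. ksc (fst (r i)) (b0 i)) = 0" by (simp add: rlincomb_eq b0_def)
    then have fz: "\<forall>i<d. fst (r i) = 0" using spec[OF b0ind, of "\<lambda>i. fst (r i)"] by simp
    have "y = (\<Sum>i<d. ksc (fst (r i)) (snd (b i)) + ksc (snd (r i)) (b0 i))"
      using r by (simp add: rlincomb_eq b0_def)
    also have "\<dots> = (\<Sum>i<d. ksc (snd (r i)) (b0 i))" using fz by (intro sum.cong) auto
    finally show "y \<in> A0" using b0A by (auto intro!: A0_sum A0_sc)
  next
    assume "y \<in> A0"
    then obtain z where z: "z \<in> A" "y = fst z" using fA by auto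
    have "rsc (0, 1) z \<in> A" by (rule rsc[OF z(1)])
    then show "(0, y) \<in> A" using z by (simp add: rsc_def)
  qed
  have neg: "(a, y) \<in> A \<Longrightarrow> (- a, - y) \<in> A" for a y
    using rsc[of "(a,y)" "(-1, 0)"] by (simp add: rsc_def ksc_minus_left)
  have fib: "(a, y) \<in> A \<Longrightarrow> (a, y') \<in> A \<longleftrightarrow> y' - y \<in> A0" for a y y'
  proof
    assume "(a, y) \<in> A" "(a, y') \<in> A"
    then have "radd (a, y') (- a, - y) \<in> A" using radd neg by blast
    then show "y' - y \<in> A0" using ker by (simp add: radd_def)
  next
    assume "(a, y) \<in> A" "y' - y \<in> A0"
    then have "radd (a, y) (0, y' - y) \<in> A" using radd ker by blast
    then show "(a, y') \<in> A" by (simp add: radd_def)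
  qed
  define D where "D a = (if a \<in> A0 then {y. (a, y) \<in> A} else {})" for a
  have Dcos: "a \<in> A0 \<Longrightarrow> (a, y) \<in> A \<Longrightarrow> D a = Defs.cos A0 y" for a y
  proof -
    assume "a \<in> A0" "(a, y) \<in> A"
    then have "D a = {y'. (a, y') \<in> A}" by (simp add: D_def)
    also have "\<dots> = {y'. y' - y \<in> A0}" using fib[of a y] \<open>(a, y) \<in> A\<close> by blast
    finally show ?thesis by (simp add: Defs.cos_def)
  qed
  have inA0: "(a, y) \<in> A \<Longrightarrow> a \<in> A0" for a y using fA by force
  have DDer: "D \<in> Der A0"
    unfolding Der_def
  proof (intro CollectI conjI ballI allI impI)
    fix a assume a: "a \<in> A0"
    then obtain z where "z \<in> A" "a = fst z" using fA by auto
    then have "(a, snd z) \<in> A" by simp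
    then show "D a \<in> quotmod A0" using Dcos a by (simp add: quotmod_def)
  next
    fix a assume "a \<notin> A0" then show "D a = {}" by (simp add: D_def)
  next
    fix a b c x y assume a: "a \<in> A0" and b: "b \<in> A0" and x: "x \<in> D a" and y: "y \<in> D b"
    have ax: "(a, x) \<in> A" and " (b, y) \<in> A" using a b x y by (auto simp: D_def)
    note by' = this(2)
    have "radd (rsc (c, 0) (a, x)) (b, y) \<in> A" using radd rsc ax by' by blast
    then have 1: "(ksc c a + b, ksc c x + y) \<in> A" by (simp add: radd_def rsc_def)
    show "D (ksc c a + b) = Defs.cos A0 (ksc c x + y)" by (rule Dcos[OF inA0[OF 1] 1])
    have "rmult (a, x) (b, y) \<in> A" using rmult ax by' by blast
    then have 2: "(a ** b, a ** y + x ** b) \<in> A" by (simp add: rmult_def)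
    show "D (a ** b) = Defs.cos A0 (a ** y + x ** b)" by (rule Dcos[OF inA0[OF 2] 2])
  qed
  have "A = gA A0 D"
    by (auto simp: gA_def D_def intro: inA0)
  then show ?thesis using DDer by blast
qed

end


lemma rinv_eq:
  fixes Q :: "('k::field,'n::finite) rmat"
  assumes c: "c \<noteq> 0" and fQ: "fst Q = ksc c (mat 1)"
  shows "rinv Q = (ksc (1/c) (mat 1), - ksc (1/c * (1/c)) (snd Q))"
proof -
  let ?Q' = "(ksc (1/c) (mat 1), - ksc (1/c * (1/c)) (snd Q)) :: ('k,'n) rmat"
  have uniq: "Q'' = ?Q'" if h: "rmult Q Q'' = rone" for Q''
  proof -
    have 1: "ksc c (fst Q'') = mat 1" and 2: "ksc c (snd Q'') + snd Q ** fst Q'' = 0"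
      using h fQ by (auto simp: rmult_def rone_def)
    have f: "fst Q'' = ksc (1/c) (mat 1)"
      using arg_cong[OF 1, of "ksc (1/c)"] c by simp
    have "ksc (1/c) (ksc c (snd Q'') + snd Q ** fst Q'') = 0" using 2 by simp
    then have "snd Q'' + ksc (1/c * (1/c)) (snd Q) = 0"
      using c f by (simp add: ksc_add_right)
    then have "snd Q'' = - ksc (1/c * (1/c)) (snd Q)" by (simp add: eq_neg_iff_add_eq_0)
    then show ?thesis using f by (simp add: prod_eq_iff)
  qed
  have ex: "rmult Q ?Q' = rone \<and> rmult ?Q' Q = rone"
    using c fQ by (auto simp: rmult_def rone_def ksc_minus_right matrix_minus_ldistrib matrix_minus_rdistrib)
  have "rmult Q (rinv Q) = rone \<and> rmult (rinv Q) Q = rone"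
    unfolding rinv_def by (rule someI[where P="\<lambda>Q'. rmult Q Q' = rone \<and> rmult Q' Q = rone", OF ex])
  then show ?thesis using uniq by blast
qed

lemma conj_eq:
  fixes Q :: "('k::field,'n::finite) rmat"
  assumes c: "c \<noteq> 0" and fQ: "fst Q = ksc c (mat 1)"
  shows "rmult (rinv Q) (rmult (a, x) Q) = (a, x + (a ** ksc (1/c) (snd Q) - ksc (1/c) (snd Q) ** a))"
proof -
  have e: "1 / c * (1 / c) * c = 1/c" using c by (simp add: field_simps)
  show ?thesis
    using c fQ unfolding rinv_eq[OF c fQ]
    by (simp add: rmult_def ksc_add_right ksc_mult_left ksc_mult_right matrix_add_ldistrib
          matrix_minus_rdistrib e algebra_simps)
qed


context setting begin

lemma shift_gA:
  assumes D: "D \<in> Der A0" and D': "D' \<in> Der A0"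
  shows "gA A0 D' = (\<lambda>(a,x). (a, x + t a)) ` gA A0 D \<longleftrightarrow>
         (\<forall>a\<in>A0. \<forall>x\<in>D a. \<forall>y\<in>D' a. x - y + t a \<in> A0)"
proof
  assume eq: "gA A0 D' = (\<lambda>(a,x). (a, x + t a)) ` gA A0 D"
  show "\<forall>a\<in>A0. \<forall>x\<in>D a. \<forall>y\<in>D' a. x - y + t a \<in> A0"
  proof (intro ballI)
    fix a x y assume a: "a \<in> A0" and x: "x \<in> D a" and y: "y \<in> D' a"
    have "(a, x + t a) \<in> gA A0 D'" unfolding eq using a x by (force simp: gA_mem)
    then have "x + t a \<in> Defs.cos A0 y" using Der_cos[OF D' a y] by (simp add: gA_mem)
    then have "x + t a - y \<in> A0" by (simp add: cos_mem)
    then show "x - y + t a \<in> A0" by (simp add: algebra_simps)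
  qed
next
  assume h: "\<forall>a\<in>A0. \<forall>x\<in>D a. \<forall>y\<in>D' a. x - y + t a \<in> A0"
  show "gA A0 D' = (\<lambda>(a,x). (a, x + t a)) ` gA A0 D"
  proof
    show "gA A0 D' \<subseteq> (\<lambda>(a,x). (a, x + t a)) ` gA A0 D"
    proof
      fix Z assume "Z \<in> gA A0 D'"
      then obtain a y where Z: "Z = (a, y)" "a \<in> A0" "y \<in> D' a" by (cases Z) (auto simp: gA_mem)
      obtain x where x: "x \<in> D a" using Der_ne[OF D Z(2)] .
      have "x - y + t a \<in> A0" using h Z x by blast
      then have "- (x - y + t a) \<in> A0" by (rule A0_neg)
      then have "(y - t a) - x \<in> A0" by (simp add: algebra_simps)
      then have "y - t a \<in> D a" using Der_cos[OF D Z(2) x] by (simp add: cos_mem)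
      then have "(a, y - t a) \<in> gA A0 D" using Z by (simp add: gA_mem)
      then show "Z \<in> (\<lambda>(a,x). (a, x + t a)) ` gA A0 D" using Z by (force intro: image_eqI)
    qed
    show "(\<lambda>(a,x). (a, x + t a)) ` gA A0 D \<subseteq> gA A0 D'"
    proof
      fix Z assume "Z \<in> (\<lambda>(a,x). (a, x + t a)) ` gA A0 D"
      then obtain a x where Z: "Z = (a, x + t a)" "a \<in> A0" "x \<in> D a" by (auto simp: gA_def)
      obtain y where y: "y \<in> D' a" using Der_ne[OF D' Z(2)] .
      have "x - y + t a \<in> A0" using h Z y by blast
      then have "x + t a \<in> D' a" using Der_cos[OF D' Z(2) y] by (simp add: cos_mem algebra_simps)
      then show "Z \<in> gA A0 D'" using Z by (simp add: gA_mem)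
    qed
  qed
qed

lemma conjR_gA:
  assumes c: "c \<noteq> 0" and fQ: "fst Q = ksc c (mat 1)"
  shows "conjR Q (gA A0 D) = (\<lambda>(a,x). (a, x + (a ** ksc (1/c) (snd Q) - ksc (1/c) (snd Q) ** a))) ` gA A0 D"
  unfolding conjR_def by (rule image_cong) (auto simp: conj_eq[OF c fQ])

lemma inner_iff: "(D, D') \<in> inner_rel A0 \<longleftrightarrow> D \<in> Der A0 \<and> D' \<in> Der A0 \<and>
   (\<exists>m. \<forall>a\<in>A0. \<forall>x\<in>D a. \<forall>y\<in>D' a. x - y + (a ** m - m ** a) \<in> A0)"
proof -
  have "Defs.cos A0 (x - y) = Defs.cos A0 (a ** m - m ** a) \<longleftrightarrow>
        x - y + (a ** (-m) - (-m) ** a) \<in> A0" for x y a m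
    by (simp add: cos_eq matrix_minus_ldistrib matrix_minus_rdistrib algebra_simps)
  then have "(\<exists>m. \<forall>a\<in>A0. \<forall>x\<in>D a. \<forall>y\<in>D' a. Defs.cos A0 (x - y) = Defs.cos A0 (a ** m - m ** a)) \<longleftrightarrow>
        (\<exists>m. \<forall>a\<in>A0. \<forall>x\<in>D a. \<forall>y\<in>D' a. x - y + (a ** m - m ** a) \<in> A0)"
    by (metis minus_minus)
  then show ?thesis unfolding inner_rel_def by simp
qed

lemma Runit_fst: "u \<in> Runits \<Longrightarrow> fst u \<noteq> 0"
  by (auto simp: Runits_def Rmul_def)

lemma rel_compat:
  assumes D: "D \<in> Der A0" and D': "D' \<in> Der A0"
  shows "(D, D') \<in> inner_rel A0 \<longleftrightarrow> (gA A0 D, gA A0 D') \<in> orbit_rel A0 d"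
proof
  assume "(D, D') \<in> inner_rel A0"
  then obtain m where m: "\<forall>a\<in>A0. \<forall>x\<in>D a. \<forall>y\<in>D' a. x - y + (a ** m - m ** a) \<in> A0"
    using inner_iff by blast
  define Q0 :: "('k,'n) rmat" where "Q0 = (mat 1, m)"
  define P where "P = scalar_rel `` {Q0}"
  have Q0G: "Q0 \<in> GLR" unfolding GLR_def mem_Collect_eq
    by (rule exI[of _ "(mat 1, - m)"]) (simp add: Q0_def rmult_def rone_def matrix_minus_ldistrib)
  have PP: "P \<in> PGLR" unfolding PGLR_def P_def quotient_def using Q0G by blast
  have PG: "P \<in> GR" unfolding GR_def
  proof (intro CollectI conjI PP ballI)
    fix Q assume "Q \<in> P"
    then obtain u where u: "u \<in> Runits" "Q = rsc u Q0" by (auto simp: P_def scalar_rel_def)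
    then show "\<exists>c. c \<noteq> 0 \<and> fst Q = ksc c (mat 1)"
      using Runit_fst[OF u(1)] by (auto simp: rsc_def Q0_def)
  qed
  have u1: "(1, 0) \<in> (Runits :: 'k rel_ring set)" by (auto simp: Runits_def Rmul_def intro!: exI[of _ "(1,0)"])
  have Q0P: "Q0 \<in> P" unfolding P_def scalar_rel_def using Q0G u1
    by (auto intro!: bexI[of _ "(1,0)"] simp: rsc_def Q0_def)
  have c: "(1::'k) \<noteq> 0" and fQ: "fst Q0 = ksc 1 (mat 1)" by (auto simp: Q0_def)
  have "gA A0 D' = conjR Q0 (gA A0 D)"
    unfolding conjR_gA[OF c fQ] using m by (subst shift_gA[OF D D']) (simp add: Q0_def)
  then show "(gA A0 D, gA A0 D') \<in> orbit_rel A0 d"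
    unfolding orbit_rel_def using gA_DefR[OF D] gA_DefR[OF D'] PG Q0P by blast
next
  assume "(gA A0 D, gA A0 D') \<in> orbit_rel A0 d"
  then obtain P Q where PG: "P \<in> GR" and QP: "Q \<in> P" and eq: "gA A0 D' = conjR Q (gA A0 D)"
    unfolding orbit_rel_def by blast
  obtain c where c: "c \<noteq> 0" "fst Q = ksc c (mat 1)" using PG QP unfolding GR_def by blast
  have "\<forall>a\<in>A0. \<forall>x\<in>D a. \<forall>y\<in>D' a. x - y + (a ** ksc (1/c) (snd Q) - ksc (1/c) (snd Q) ** a) \<in> A0"
    using eq unfolding conjR_gA[OF c] by (subst (asm) shift_gA[OF D D'])
  then show "(D, D') \<in> inner_rel A0" using D D' inner_iff by blast
qed

end



lemma quot_bij:
  assumes g: "bij_betw g X Y" and r: "r \<subseteq> X \<times> X" and s: "s \<subseteq> Y \<times> Y"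
    and compat: "\<And>x x'. x \<in> X \<Longrightarrow> x' \<in> X \<Longrightarrow> (x, x') \<in> r \<longleftrightarrow> (g x, g x') \<in> s"
  shows "bij_betw (image g) (X // r) (Y // s)"
proof -
  have inj: "inj_on g X" and im: "g ` X = Y" using g by (auto simp: bij_betw_def)
  have key: "g ` (r `` {x}) = s `` {g x}" if x: "x \<in> X" for x
  proof
    show "g ` (r `` {x}) \<subseteq> s `` {g x}" using r compat x by auto
    show "s `` {g x} \<subseteq> g ` (r `` {x})"
    proof
      fix y assume "y \<in> s `` {g x}"
      then have y: "(g x, y) \<in> s" by simp
      then have "y \<in> Y" using s by auto
      then obtain x' where x': "x' \<in> X" "y = g x'" using im by auto
      then have "(x, x') \<in> r" using compat[OF x x'(1)] y by simp
      then show "y \<in> g ` (r `` {x})" using x' by auto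
    qed
  qed
  show ?thesis unfolding bij_betw_def
  proof
    show "inj_on (image g) (X // r)"
    proof (rule inj_onI)
      fix C C' assume C: "C \<in> X // r" and C': "C' \<in> X // r" and e: "g ` C = g ` C'"
      have "C \<subseteq> X" "C' \<subseteq> X" using C C' r by (auto simp: quotient_def)
      then show "C = C'" using e inj by (simp add: inj_on_image_eq_iff)
    qed
    show "image g ` (X // r) = Y // s"
    proof
      show "image g ` (X // r) \<subseteq> Y // s"
        using key im by (auto simp: quotient_def)
      show "Y // s \<subseteq> image g ` (X // r)"
      proof
        fix B assume "B \<in> Y // s"
        then obtain y where y: "y \<in> Y" "B = s `` {y}" by (auto simp: quotient_def)
        then obtain x where x: "x \<in> X" "y = g x" using im by auto
        then have "B = g ` (r `` {x})" using key y by simp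
        then show "B \<in> image g ` (X // r)" using x by (auto simp: quotient_def)
      qed
    qed
  qed
qed

context setting begin

lemma main: "\<exists>f. bij_betw f (H1 A0) (DefR A0 d // orbit_rel A0 d)"
proof
  have g: "bij_betw (gA A0) (Der A0) (DefR A0 d)"
    unfolding bij_betw_def using gA_inj gA_DefR DefR_surj by blast
  show "bij_betw (image (gA A0)) (H1 A0) (DefR A0 d // orbit_rel A0 d)"
    unfolding H1_def
  proof (rule quot_bij[OF g])
    show "inner_rel A0 \<subseteq> Der A0 \<times> Der A0" by (auto simp: inner_rel_def)
    show "orbit_rel A0 d \<subseteq> DefR A0 d \<times> DefR A0 d" by (auto simp: orbit_rel_def)
    show "\<And>x x'. x \<in> Der A0 \<Longrightarrow> x' \<in> Der A0 \<Longrightarrow>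
      (x, x') \<in> inner_rel A0 \<longleftrightarrow> (gA A0 x, gA A0 x') \<in> orbit_rel A0 d" by (rule rel_compat)
  qed
qed

end

theorem proposition3p8:
  fixes A0 :: "('k::field,'n::finite) kmat set" and d :: nat
  assumes "k_subalgebra A0" and "k_dim A0 d"
  shows "\<exists>f. bij_betw f (H1 A0) (DefR A0 d // orbit_rel A0 d)"
proof -
  interpret setting A0 d using assms by unfold_locales
  show ?thesis by (rule main)
qed



end
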